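(* Let $P(\lambda,\mu)\in\mathbb{C}[\lambda,\mu]$, let $\ell\subset\mathbb{C}$ be a closed half-line emanating from the origin, and let $N$ be a positive integer. Let $B$ be the sum of the absolute values of all coefficients of the two partial derivatives $\partial P/\partial\lambda$ and $\partial P/\partial\mu$. If for all $j,k\in\{0,1,\dots,N-1\}$ the distance from $P(e^{2\pi ij/N},e^{2\pi ik/N})$ to $\ell$ exceeds $\pi B/N$, then the equation $P(\lambda,\mu)=0$ has no solution $(\lambda,\mu)\in\mathbb{C}^2$ with $|\lambda|\le1$ and $|\mu|\le1$. *)

theory Defs
  imports "HOL-Analysis.Analysis" "HOL-Computational_Algebra.Polynomial"
begin

text \<open>A bivariate polynomial P(lambda, mu) in C[lambda, mu] is represented as an element of
  C[lambda][mu], i.e. a polynomial in mu whose coefficients are polynomials in lambda.\<close>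

type_synonym bipoly = "complex poly poly"

definition bieval :: "bipoly \<Rightarrow> complex \<Rightarrow> complex \<Rightarrow> complex" where
  "bieval P l m = poly (map_poly (\<lambda>q. poly q l) P) m"

definition dlambda :: "bipoly \<Rightarrow> bipoly" where
  "dlambda P = map_poly pderiv P"

definition dmu :: "bipoly \<Rightarrow> bipoly" where
  "dmu P = pderiv P"

definition coeff_abs_sum :: "bipoly \<Rightarrow> real" where
  "coeff_abs_sum P = (\<Sum>j\<le>degree P. \<Sum>i\<le>degree (coeff P j). norm (coeff (coeff P j) i))"

definition halfline :: "complex \<Rightarrow> complex set" where
  "halfline d = {complex_of_real t * d | t. t \<ge> 0}"

end

theory Submission
  imports Defs "HOL-Complex_Analysis.Complex_Analysis"
begin

lemma poly_sum_ext:
  fixes p :: "'a::comm_semiring_1 poly"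
  assumes "degree p \<le> n"
  shows "poly p x = (\<Sum>i\<le>n. coeff p i * x^i)"
proof -
  have "poly p x = (\<Sum>i\<le>degree p. coeff p i * x^i)" by (rule poly_altdef)
  also have "\<dots> = (\<Sum>i\<le>n. coeff p i * x^i)"
    by (rule sum.mono_neutral_left) (use assms in \<open>auto simp: coeff_eq_0\<close>)
  finally show ?thesis .
qed

lemma bieval_sum:
  assumes "degree P \<le> n"
  shows "bieval P l m = (\<Sum>j\<le>n. poly (coeff P j) l * m^j)"
proof -
  have "degree (map_poly (\<lambda>q. poly q l) P) \<le> n"
    using map_poly_degree_leq[of "\<lambda>q. poly q l" P] assms by linarith
  then show ?thesis unfolding bieval_def
    by (subst poly_sum_ext[where n=n]) (auto simp: coeff_map_poly)
qed

lemma poly_norm_bound: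
  fixes c :: "complex poly"
  assumes "norm l \<le> 1"
  shows "norm (poly c l) \<le> (\<Sum>i\<le>degree c. norm (coeff c i))"
proof -
  have "norm (poly c l) \<le> (\<Sum>i\<le>degree c. norm (coeff c i * l^i))"
    unfolding poly_altdef by (rule norm_sum)
  also have "\<dots> \<le> (\<Sum>i\<le>degree c. norm (coeff c i))"
  proof (rule sum_mono)
    fix i
    have "norm (l^i) \<le> 1" using assms by (simp add: norm_power power_le_one)
    then show "norm (coeff c i * l^i) \<le> norm (coeff c i)"
      by (simp add: norm_mult mult_left_le)
  qed
  finally show ?thesis .
qed

lemma bieval_bound:
  assumes "norm l \<le> 1" "norm m \<le> 1"
  shows "norm (bieval Q l m) \<le> coeff_abs_sum Q"
proof -
  have "norm (bieval Q l m) \<le> (\<Sum>j\<le>degree Q. norm (poly (coeff Q j) l * m^j))"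
    unfolding bieval_sum[OF order_refl] by (rule norm_sum)
  also have "\<dots> \<le> coeff_abs_sum Q"
    unfolding coeff_abs_sum_def
  proof (rule sum_mono)
    fix j
    have "norm (m^j) \<le> 1" using assms by (simp add: norm_power power_le_one)
    then have "norm (poly (coeff Q j) l * m^j) \<le> norm (poly (coeff Q j) l)"
      by (simp add: norm_mult mult_left_le)
    also have "\<dots> \<le> (\<Sum>i\<le>degree (coeff Q j). norm (coeff (coeff Q j) i))"
      by (rule poly_norm_bound[OF assms(1)])
    finally show "norm (poly (coeff Q j) l * m^j) \<le> (\<Sum>i\<le>degree (coeff Q j). norm (coeff (coeff Q j) i))" .
  qed
  finally show ?thesis .
qed

lemma deriv_lambda:
  "((\<lambda>l. bieval P l m) has_field_derivative bieval (dlambda P) l m) (at l)"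
proof -
  have d: "degree (dlambda P) \<le> degree P" unfolding dlambda_def by (rule map_poly_degree_leq)
  have c: "coeff (dlambda P) j = pderiv (coeff P j)" for j
    unfolding dlambda_def by (simp add: coeff_map_poly)
  show ?thesis
    unfolding bieval_sum[OF order_refl, of P] bieval_sum[OF d] c
    by (intro DERIV_sum DERIV_cmult_right poly_DERIV)
qed

lemma pderiv_map_eval:
  "pderiv (map_poly (\<lambda>q. poly q l) P) = map_poly (\<lambda>q. poly q l) (pderiv P)"
  by (rule poly_eqI) (simp add: coeff_pderiv coeff_map_poly)

lemma deriv_mu:
  "((\<lambda>m. bieval P l m) has_field_derivative bieval (dmu P) l m) (at m)"
  unfolding bieval_def dmu_def pderiv_map_eval[symmetric] by (rule poly_DERIV)

lemma lip:
  assumes "norm l \<le> 1" "norm l' \<le> 1" "norm m \<le> 1" "norm m' \<le> 1"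
  shows "norm (bieval P l m - bieval P l' m') \<le>
    coeff_abs_sum (dlambda P) * norm (l - l') + coeff_abs_sum (dmu P) * norm (m - m')"
proof -
  have 1: "norm (bieval P l m - bieval P l' m) \<le> coeff_abs_sum (dlambda P) * norm (l - l')"
    by (rule field_differentiable_bound[where S="cball 0 1" and f'="\<lambda>z. bieval (dlambda P) z m"])
       (auto intro: has_field_derivative_at_within deriv_lambda bieval_bound simp: assms)
  have 2: "norm (bieval P l' m - bieval P l' m') \<le> coeff_abs_sum (dmu P) * norm (m - m')"
    by (rule field_differentiable_bound[where S="cball 0 1" and f'="\<lambda>z. bieval (dmu P) l' z"])
       (auto intro: has_field_derivative_at_within deriv_mu bieval_bound simp: assms)
  have "norm (bieval P l m - bieval P l' m') \<le> norm (bieval P l m - bieval P l' m) + norm (bieval P l' m - bieval P l' m')"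
    using norm_triangle_ineq[of "bieval P l m - bieval P l' m" "bieval P l' m - bieval P l' m'"] by simp
  with 1 2 show ?thesis by linarith
qed

lemma chord:
  "norm (exp (\<i> * of_real a) - exp (\<i> * of_real b)) \<le> \<bar>a - b\<bar>"
proof -
  have "norm ((\<lambda>z. exp (\<i> * z)) (of_real a) - (\<lambda>z. exp (\<i> * z)) (of_real b)) \<le> 1 * norm (of_real a - of_real b :: complex)"
  proof (rule field_differentiable_bound[where S="\<real>" and f'="\<lambda>z. \<i> * exp (\<i> * z)"])
    show "convex (\<real> :: complex set)" by (rule convex_Reals)
    fix z :: complex assume "z \<in> \<real>"
    show "((\<lambda>z. exp (\<i> * z)) has_field_derivative \<i> * exp (\<i> * z)) (at z within \<real>)"
      by (auto intro!: derivative_eq_intros)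
    from \<open>z \<in> \<real>\<close> obtain t where "z = of_real t" by (auto elim: Reals_cases)
    then show "norm (\<i> * exp (\<i> * z)) \<le> 1" by (simp add: norm_mult)
  qed auto
  then show ?thesis by (simp flip: of_real_diff)
qed

lemma grid:
  assumes "norm z = 1" "N > 0"
  shows "\<exists>j<N. norm (z - exp (2 * pi * \<i> * of_nat j / of_nat N)) \<le> pi / real N"
proof -
  define \<theta> where "\<theta> = Arg z"
  have z: "z = exp (\<i> * of_real \<theta>)"
  proof -
    have "z \<noteq> 0" using assms(1) by auto
    then show ?thesis using Arg_eq[of z] assms(1) by (simp add: \<theta>_def)
  qed
  define x where "x = \<theta> * real N / (2 * pi)"
  define r where "r = round x"
  have rx: "\<bar>of_int r - x\<bar> \<le> 1/2" unfolding r_def by (rule of_int_round_abs_le)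
  define q where "q = r div int N"
  define j where "j = nat (r mod int N)"
  have jN: "j < N" unfolding j_def using assms(2) by (simp add: nat_less_iff)
  have "int j = r mod int N" unfolding j_def using assms(2) by simp
  also have "\<dots> = r - int N * q" unfolding q_def by (metis minus_mult_div_eq_mod)
  finally have jr: "int j = r - int N * q" .
  have e: "(of_int r :: complex) = of_nat j + of_nat N * of_int q"
    using arg_cong[OF jr, of "of_int :: int \<Rightarrow> complex"] by simp
  then have "2 * pi * \<i> * of_nat j / of_nat N = \<i> * of_real (2 * pi * r / N) - (2 * of_int q * pi) * \<i>"
    using assms(2) by (simp add: field_simps e)
  then have g: "exp (2 * pi * \<i> * of_nat j / of_nat N) = exp (\<i> * of_real (2 * pi * r / N))"
  proof -
    have "exp (2 * complex_of_int q * complex_of_real pi * \<i>) = 1"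
      using exp_integer_2pi[of "of_int q"] by simp
    then show ?thesis using \<open>2 * pi * \<i> * of_nat j / of_nat N = _\<close> by (simp add: exp_diff)
  qed
  have "norm (z - exp (2 * pi * \<i> * of_nat j / of_nat N)) \<le> \<bar>\<theta> - 2 * pi * r / N\<bar>"
    unfolding g z by (rule chord)
  also have "\<theta> - 2 * pi * r / N = (2 * pi / N) * (x - r)"
    using assms(2) by (simp add: x_def field_simps)
  also have "\<bar>\<dots>\<bar> = (2 * pi / N) * \<bar>x - r\<bar>" by (simp add: abs_mult)
  also have "\<dots> \<le> (2 * pi / N) * (1/2)"
    using rx by (intro mult_left_mono) (auto simp: abs_minus_commute)
  finally show ?thesis using jN by (intro exI[of _ j]) auto
qed

lemma halfline_unbounded:
  assumes "d \<noteq> 0" "bounded K"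
  shows "halfline d - K \<noteq> {}"
proof -
  obtain B where B: "\<And>x. x \<in> K \<Longrightarrow> norm x \<le> B" using assms(2) bounded_iff by blast
  define t where "t = (\<bar>B\<bar> + 1) / norm d"
  have t: "t \<ge> 0" unfolding t_def by simp
  have "norm (complex_of_real t * d) = t * norm d"
    using t by (simp add: norm_mult)
  also have "\<dots> = \<bar>B\<bar> + 1" using assms(1) by (simp add: t_def)
  finally have "norm (complex_of_real t * d) = \<bar>B\<bar> + 1" .
  then have "complex_of_real t * d \<notin> K" using B by force
  moreover have "complex_of_real t * d \<in> halfline d" using t unfolding halfline_def by blast
  ultimately show ?thesis by blast
qed

lemma halfline_connected: "connected (halfline d)"
proof -
  have "halfline d = (\<lambda>t. complex_of_real t * d) ` {0..}"
    unfolding halfline_def by auto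
  then show ?thesis
    by (metis connected_continuous_image convex_connected convex_real_interval(1)
        continuous_on_mult_right continuous_on_of_real_id)
qed

lemma lemmaA:
  fixes f :: "complex \<Rightarrow> complex"
  assumes hol: "f holomorphic_on UNIV" and d: "d \<noteq> 0"
    and bd: "\<And>z. norm z = 1 \<Longrightarrow> f z \<notin> halfline d"
    and z: "norm z \<le> 1"
  shows "f z \<notin> halfline d"
proof
  assume fz: "f z \<in> halfline d"
  show False
  proof (cases "f constant_on UNIV")
    case True
    then obtain y where "\<And>x. f x = y" unfolding constant_on_def by blast
    then show False using bd[of 1] fz by simp
  next
    case False
    have op: "open (f ` ball 0 1)"
      by (rule open_mapping_thm[OF hol]) (use False in auto)
    define K where "K = f ` cball 0 1"
    have cK: "compact K" unfolding K_def
      by (intro compact_continuous_image holomorphic_on_imp_continuous_on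
          holomorphic_on_subset[OF hol]) auto
    have "halfline d \<inter> K \<noteq> {}" using fz z unfolding K_def by auto
    moreover have "halfline d - K \<noteq> {}"
      by (rule halfline_unbounded[OF d compact_imp_bounded[OF cK]])
    ultimately have "halfline d \<inter> frontier K \<noteq> {}"
      by (intro connected_Int_frontier halfline_connected)
    then obtain w where w: "w \<in> halfline d" "w \<in> frontier K" by blast
    have "frontier K = K - interior K"
      using cK by (simp add: frontier_def compact_imp_closed closure_closed)
    with w obtain z' where z': "norm z' \<le> 1" "w = f z'" "w \<notin> interior K"
      unfolding K_def by auto
    have "f ` ball 0 1 \<subseteq> interior K"
      by (rule interior_maximal) (auto simp: K_def op)
    then have "norm z' \<noteq> 1 \<Longrightarrow> False" using z'
      by (metis image_eqI le_less mem_ball_0 subsetD)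
    then show False using bd[of z'] z' w by auto
  qed
qed

lemma hol_lambda: "(\<lambda>l. bieval P l m) holomorphic_on UNIV"
  unfolding holomorphic_on_def field_differentiable_def
  using deriv_lambda has_field_derivative_at_within by blast

lemma hol_mu: "(\<lambda>m. bieval P l m) holomorphic_on UNIV"
  unfolding holomorphic_on_def field_differentiable_def
  using deriv_mu has_field_derivative_at_within by blast

lemma coeff_abs_sum_nonneg: "coeff_abs_sum Q \<ge> 0"
  unfolding coeff_abs_sum_def by (intro sum_nonneg) auto

theorem lemma5p2:
  fixes P :: bipoly and d :: complex and N :: nat
  assumes "d \<noteq> 0" and "N > 0"
    and "\<And>j k. j < N \<Longrightarrow> k < N \<Longrightarrow>
           infdist (bieval P (exp (2 * pi * \<i> * of_nat j / of_nat N))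
                             (exp (2 * pi * \<i> * of_nat k / of_nat N))) (halfline d)
           > pi * (coeff_abs_sum (dlambda P) + coeff_abs_sum (dmu P)) / real N"
  shows "\<not> (\<exists>l m. norm l \<le> 1 \<and> norm m \<le> 1 \<and> bieval P l m = 0)"
proof -
  define A where "A = coeff_abs_sum (dlambda P)"
  define C where "C = coeff_abs_sum (dmu P)"
  have A0: "A \<ge> 0" and C0: "C \<ge> 0" unfolding A_def C_def by (rule coeff_abs_sum_nonneg)+
  have gn: "norm (exp (2 * pi * \<i> * of_nat j / of_nat N)) = 1" for j
  proof -
    have "2 * pi * \<i> * of_nat j / of_nat N = \<i> * of_real (2 * pi * j / N)" by simp
    then show ?thesis by simp
  qed
  have torus: "bieval P l m \<notin> halfline d" if lm: "norm l = 1" "norm m = 1" for l m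
  proof
    assume mem: "bieval P l m \<in> halfline d"
    obtain j where j: "j < N" "norm (l - exp (2 * pi * \<i> * of_nat j / of_nat N)) \<le> pi / real N"
      using grid[OF lm(1) assms(2)] by blast
    obtain k where k: "k < N" "norm (m - exp (2 * pi * \<i> * of_nat k / of_nat N)) \<le> pi / real N"
      using grid[OF lm(2) assms(2)] by blast
    define g1 where "g1 = exp (2 * pi * \<i> * of_nat j / of_nat N)"
    define g2 where "g2 = exp (2 * pi * \<i> * of_nat k / of_nat N)"
    have "norm (bieval P l m - bieval P g1 g2) \<le> A * norm (l - g1) + C * norm (m - g2)"
      unfolding A_def C_def by (rule lip) (use lm gn in \<open>auto simp: g1_def g2_def\<close>)
    also have "\<dots> \<le> A * (pi / N) + C * (pi / N)"
      using j k A0 C0 unfolding g1_def g2_def by (intro add_mono mult_left_mono) auto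
    also have "\<dots> = pi * (A + C) / N" by (simp add: field_simps add_divide_distrib)
    finally have dd: "dist (bieval P g1 g2) (bieval P l m) \<le> pi * (A + C) / N"
      by (simp add: dist_norm norm_minus_commute)
    have "infdist (bieval P g1 g2) (halfline d) \<le> infdist (bieval P l m) (halfline d) + dist (bieval P g1 g2) (bieval P l m)"
      by (rule infdist_triangle)
    also have "\<dots> = dist (bieval P g1 g2) (bieval P l m)" using mem by simp
    finally have "infdist (bieval P g1 g2) (halfline d) \<le> pi * (A + C) / N" using dd by linarith
    moreover have "infdist (bieval P g1 g2) (halfline d) > pi * (A + C) / N"
      using assms(3)[OF j(1) k(1)] unfolding g1_def g2_def A_def C_def .
    ultimately show False by linarith
  qed
  have step2: "bieval P l m \<notin> halfline d" if "norm l \<le> 1" "norm m = 1" for l m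
    by (rule lemmaA[OF hol_lambda assms(1) _ that(1)]) (use torus that(2) in auto)
  have step3: "bieval P l m \<notin> halfline d" if "norm l \<le> 1" "norm m \<le> 1" for l m
    by (rule lemmaA[OF hol_mu assms(1) _ that(2)]) (use step2 that(1) in auto)
  have "0 \<in> halfline d" unfolding halfline_def by auto
  then show ?thesis using step3 by metis
qed

end
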